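(* Let $\mathcal F=\{F^c_{t,k}\}$ be an F-system. Then for every even positive integer $t$, $|S_{2t}\setminus Z_{3t,2t}|\ge|S_t\cup Z_{3t/2,t}|+|S_{2t,t}|$.
   Context: F-system: a family $\mathcal F=\{F^c_{t,k}\}$ of sets of positive integers, indexed by $c\in\{A,B\}$ and integers $0<k\le t$, such that (F1) $|F^c_{t,k}|\ge k$ for all $c,t,k$; and (F2) $F^A_{t,k}\cap F^B_{t',k'}=\emptyset$ for all $k\le t$, $k'\le t'$ with $k+k'\le\max(t,t')$. Notation: $F^c_t=\bigcup_{0<\kappa\le\tau\le t}F^c_{\tau,\kappa}$ for $c\in\{A,B\}$; $S_t=F^A_t\cap F^B_t$; $S_{2t,t}=S_{2t}\cap(F^A_{2t,t}\cup F^B_{2t,t})$; for even $t$, $Z_{3t/2,t}=F^A_{3t/2,t}\cap F^B_{3t/2,t}$ (so also $Z_{3t,2t}=F^A_{3t,2t}\cap F^B_{3t,2t}$). *)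

theory Defs
  imports Main "HOL-Library.Extended_Nat"
begin

datatype col = CA | CB

definition ecard :: "'a set \<Rightarrow> enat" where
  "ecard X = (if finite X then enat (card X) else \<infinity>)"

text \<open>An F-system: F c t k is the set F^c_{t,k}; only indices 0 < k <= t matter.\<close>
definition F_system :: "(col \<Rightarrow> nat \<Rightarrow> nat \<Rightarrow> nat set) \<Rightarrow> bool" where
  "F_system F \<longleftrightarrow>
     (\<forall>c t k. 0 < k \<and> k \<le> t \<longrightarrow> F c t k \<subseteq> {n. 0 < n}) \<and>
     (\<forall>c t k. 0 < k \<and> k \<le> t \<longrightarrow> ecard (F c t k) \<ge> enat k) \<and>
     (\<forall>t k t' k'. 0 < k \<and> k \<le> t \<and> 0 < k' \<and> k' \<le> t' \<and> k + k' \<le> max t t'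
        \<longrightarrow> F CA t k \<inter> F CB t' k' = {})"

definition Fu :: "(col \<Rightarrow> nat \<Rightarrow> nat \<Rightarrow> nat set) \<Rightarrow> col \<Rightarrow> nat \<Rightarrow> nat set" where
  "Fu F c t = (\<Union>\<tau>\<in>{1..t}. \<Union>\<kappa>\<in>{1..\<tau>}. F c \<tau> \<kappa>)"

definition S :: "(col \<Rightarrow> nat \<Rightarrow> nat \<Rightarrow> nat set) \<Rightarrow> nat \<Rightarrow> nat set" where
  "S F t = Fu F CA t \<inter> Fu F CB t"

definition S2 :: "(col \<Rightarrow> nat \<Rightarrow> nat \<Rightarrow> nat set) \<Rightarrow> nat \<Rightarrow> nat set" where
  "S2 F t = S F (2*t) \<inter> (F CA (2*t) t \<union> F CB (2*t) t)"

definition Z :: "(col \<Rightarrow> nat \<Rightarrow> nat \<Rightarrow> nat set) \<Rightarrow> nat \<Rightarrow> nat \<Rightarrow> nat set" where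
  "Z F t' k = F CA t' k \<inter> F CB t' k"

end

theory Submission
  imports Defs
begin

lemma ecard_mono: "A \<subseteq> B \<Longrightarrow> ecard A \<le> ecard B"
  unfolding ecard_def by (auto intro: card_mono dest: finite_subset)

lemma ecard_Un_disj: "A \<inter> B = {} \<Longrightarrow> ecard (A \<union> B) = ecard A + ecard B"
  unfolding ecard_def by (auto simp: card_Un_disjoint)

lemma Fu_iff: "x \<in> Fu F c t \<longleftrightarrow> (\<exists>\<tau> \<kappa>. 1 \<le> \<kappa> \<and> \<kappa> \<le> \<tau> \<and> \<tau> \<le> t \<and> x \<in> F c \<tau> \<kappa>)"
  unfolding Fu_def by (auto; force)

lemma Fu_mono: "t \<le> t' \<Longrightarrow> Fu F c t \<subseteq> Fu F c t'"
  by (auto simp: Fu_iff) (meson le_trans)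

theorem lemma4:
  fixes F :: "col \<Rightarrow> nat \<Rightarrow> nat \<Rightarrow> nat set" and t :: nat
  assumes "F_system F" and "even t" and "0 < t"
  shows "ecard (S F (2*t) - Z F (3*t) (2*t))
           \<ge> ecard (S F t \<union> Z F (3*t div 2) t) + ecard (S2 F t)"
proof -
  obtain s where ts: "t = 2*s" using assms(2) by blast
  have s0: "0 < s" using assms(3) ts by simp
  have D: "\<And>t k t' k' x. 0<k \<Longrightarrow> k\<le>t \<Longrightarrow> 0<k' \<Longrightarrow> k'\<le>t' \<Longrightarrow> k+k' \<le> max t t'
      \<Longrightarrow> x \<in> F CA t k \<Longrightarrow> x \<in> F CB t' k' \<Longrightarrow> False"
    using assms(1) unfolding F_system_def by blast
  have e1: "3*t div 2 = 3*s" "3*t = 6*s" "2*t = 4*s" using ts by auto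
  define P where "P = S F t \<union> Z F (3*t div 2) t"
  define Q where "Q = S2 F t"
  have sub: "P \<union> Q \<subseteq> S F (2*t) - Z F (3*t) (2*t)"
  proof
    fix x assume x: "x \<in> P \<union> Q"
    have inS: "x \<in> S F (2*t)"
    proof -
      have "x \<in> S F t \<or> x \<in> Z F (3*s) (2*s) \<or> x \<in> S F (4*s)"
        using x unfolding P_def Q_def S2_def e1 ts by auto
      then show ?thesis
      proof (elim disjE)
        assume "x \<in> S F t" then show ?thesis unfolding S_def ts
          using Fu_mono[of "2*s" "2*(2*s)" F] by auto
      next
        assume h: "x \<in> Z F (3*s) (2*s)"
        have "x \<in> F CA (3*s) (2*s)" "x \<in> F CB (3*s) (2*s)" using h unfolding Z_def by auto
        moreover have "1 \<le> 2*s" "2*s \<le> 3*s" "3*s \<le> 2*t" using s0 ts by auto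
        ultimately show ?thesis unfolding S_def Int_iff Fu_iff by blast
      qed (simp add: e1)
    qed
    have notZ: "x \<notin> Z F (6*s) (4*s)"
    proof
      assume z: "x \<in> Z F (6*s) (4*s)"
      hence za: "x \<in> F CA (6*s) (4*s)" and zb: "x \<in> F CB (6*s) (4*s)" unfolding Z_def by auto
      have "x \<in> S F t \<or> x \<in> Z F (3*s) (2*s) \<or> x \<in> F CA (4*s) (2*s) \<or> x \<in> F CB (4*s) (2*s)"
        using x unfolding P_def Q_def S2_def e1 ts by auto
      then show False
      proof (elim disjE)
        assume "x \<in> S F t"
        then obtain \<tau> \<kappa> where "1 \<le> \<kappa>" "\<kappa> \<le> \<tau>" "\<tau> \<le> 2*s" "x \<in> F CB \<tau> \<kappa>"
          unfolding S_def Int_iff Fu_iff ts by blast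
        then show False by (intro D[OF _ _ _ _ _ za]) (use s0 in auto)
      next
        assume "x \<in> Z F (3*s) (2*s)"
        hence "x \<in> F CB (3*s) (2*s)" unfolding Z_def by auto
        then show False by (intro D[OF _ _ _ _ _ za]) (use s0 in auto)
      next
        assume "x \<in> F CA (4*s) (2*s)"
        then show False by (intro D[OF _ _ _ _ _ _ zb]) (use s0 in auto)
      next
        assume "x \<in> F CB (4*s) (2*s)"
        then show False by (intro D[OF _ _ _ _ _ za]) (use s0 in auto)
      qed
    qed
    show "x \<in> S F (2*t) - Z F (3*t) (2*t)" using inS notZ e1 by simp
  qed
  have disj: "P \<inter> Q = {}"
  proof (rule ccontr)
    assume "P \<inter> Q \<noteq> {}"
    then obtain x where xp: "x \<in> P" and xq: "x \<in> Q" by blast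
    have q: "x \<in> F CA (4*s) (2*s) \<or> x \<in> F CB (4*s) (2*s)"
      using xq unfolding Q_def S2_def ts by auto
    have "x \<in> S F t \<or> x \<in> Z F (3*s) (2*s)" using xp unfolding P_def e1 ts by auto
    then show False
    proof
      assume "x \<in> S F t"
      then obtain \<tau> \<kappa> \<tau>' \<kappa>' where a: "1 \<le> \<kappa>" "\<kappa> \<le> \<tau>" "\<tau> \<le> 2*s" "x \<in> F CA \<tau> \<kappa>"
        and b: "1 \<le> \<kappa>'" "\<kappa>' \<le> \<tau>'" "\<tau>' \<le> 2*s" "x \<in> F CB \<tau>' \<kappa>'"
        unfolding S_def Int_iff Fu_iff ts by blast
      from q show False
      proof
        assume qa: "x \<in> F CA (4*s) (2*s)"
        show False by (rule D[OF _ _ _ _ _ qa b(4)]) (use b s0 in auto)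
      next
        assume qb: "x \<in> F CB (4*s) (2*s)"
        show False by (rule D[OF _ _ _ _ _ a(4) qb]) (use a s0 in auto)
      qed
    next
      assume "x \<in> Z F (3*s) (2*s)"
      hence a: "x \<in> F CA (3*s) (2*s)" and b: "x \<in> F CB (3*s) (2*s)" unfolding Z_def by auto
      from q show False
      proof
        assume qa: "x \<in> F CA (4*s) (2*s)"
        show False by (rule D[OF _ _ _ _ _ qa b]) (use s0 in auto)
      next
        assume qb: "x \<in> F CB (4*s) (2*s)"
        show False by (rule D[OF _ _ _ _ _ a qb]) (use s0 in auto)
      qed
    qed
  qed
  have "ecard P + ecard Q = ecard (P \<union> Q)" using ecard_Un_disj[OF disj] by simp
  also have "\<dots> \<le> ecard (S F (2*t) - Z F (3*t) (2*t))" by (rule ecard_mono[OF sub])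
  finally show ?thesis unfolding P_def Q_def .
qed

end
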